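(* Let $M$ be a matroid, let $S,T$ be disjoint subsets of $E(M)$, let $k:=\kappa_M(S,T)$, and let $(A_1,\dots,A_t)$ be a sequence of sets with $A_1\subseteq A_2\subseteq\dots\subseteq A_t$, $S\subseteq A_i\subseteq E(M)-T$ and $\lambda_M(A_i)=k$ for all $i$; put $B_i:=E(M)-A_i$. Let $(C,D)$ be a partition of $E(M)-(S\cup T)$ such that $C$ is independent, $D$ is coindependent, and $\lambda_{M/C\setminus D}(S)=k$. Let $i,j\in\{1,\dots,t\}$ with $i<j$, let $C':=C\cap(A_j-A_i)$, $D':=D\cap(A_j-A_i)$, and $M':=M/C'\setminus D'$. Then $(A_i,B_j)$ is a partition of $E(M')$ with $S\subseteq A_i$, $T\subseteq B_j$ and $\lambda_{M'}(A_i)=k$. Moreover, $M'|A_i=M|A_i$ and $M'|B_j=M|B_j$.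
   Context: For a matroid $M$ with ground set $E$, $\lambda_M(X):=r_M(X)+r_M(E-X)-r(M)$, and for disjoint $S,T\subseteq E$, $\kappa_M(S,T):=\min\{\lambda_M(X):S\subseteq X\subseteq E-T\}$. $M|X$ denotes the restriction of $M$ to $X$. *)

theory Defs
  imports Main
begin

type_synonym 'a matroid = "'a set \<times> ('a set \<Rightarrow> bool)"

definition ground :: "'a matroid \<Rightarrow> 'a set" where
  "ground M = fst M"

definition indep :: "'a matroid \<Rightarrow> 'a set \<Rightarrow> bool" where
  "indep M X = snd M X"

definition matroid :: "'a matroid \<Rightarrow> bool" where
  "matroid M \<longleftrightarrow>
     finite (ground M) \<and>
     indep M {} \<and>
     (\<forall>X. indep M X \<longrightarrow> X \<subseteq> ground M) \<and>
     (\<forall>X Y. indep M Y \<and> X \<subseteq> Y \<longrightarrow> indep M X) \<and>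
     (\<forall>X Y. indep M X \<and> indep M Y \<and> card X < card Y \<longrightarrow>
        (\<exists>e\<in>Y - X. indep M (insert e X)))"

definition rank :: "'a matroid \<Rightarrow> 'a set \<Rightarrow> nat" where
  "rank M X = Max (card ` {Y. Y \<subseteq> X \<and> indep M Y})"

definition basis :: "'a matroid \<Rightarrow> 'a set \<Rightarrow> bool" where
  "basis M B \<longleftrightarrow> indep M B \<and> (\<forall>Y. indep M Y \<and> B \<subseteq> Y \<longrightarrow> Y = B)"

definition dual :: "'a matroid \<Rightarrow> 'a matroid" where
  "dual M = (ground M, \<lambda>X. X \<subseteq> ground M \<and> (\<exists>B. basis M B \<and> B \<inter> X = {}))"

definition coindep :: "'a matroid \<Rightarrow> 'a set \<Rightarrow> bool" where
  "coindep M X \<longleftrightarrow> indep (dual M) X"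

definition conn :: "'a matroid \<Rightarrow> 'a set \<Rightarrow> nat" where
  "conn M X = rank M X + rank M (ground M - X) - rank M (ground M)"

definition kappa :: "'a matroid \<Rightarrow> 'a set \<Rightarrow> 'a set \<Rightarrow> nat" where
  "kappa M S T = Min {conn M X | X. S \<subseteq> X \<and> X \<subseteq> ground M - T}"

definition deletion :: "'a matroid \<Rightarrow> 'a set \<Rightarrow> 'a matroid" where
  "deletion M D = (ground M - D, \<lambda>X. indep M X \<and> X \<subseteq> ground M - D)"

definition contraction :: "'a matroid \<Rightarrow> 'a set \<Rightarrow> 'a matroid" where
  "contraction M C = (ground M - C,
     \<lambda>X. X \<subseteq> ground M - C \<and> rank M (X \<union> C) = card X + rank M C)"

definition restriction :: "'a matroid \<Rightarrow> 'a set \<Rightarrow> 'a matroid" where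
  "restriction M X = deletion M (ground M - X)"

definition minor :: "'a matroid \<Rightarrow> 'a set \<Rightarrow> 'a set \<Rightarrow> 'a matroid" where
  "minor M C D = deletion (contraction M C) D"

end

theory Submission
  imports Defs
begin


lemma mat_finite: "matroid M \<Longrightarrow> finite (ground M)" by (simp add: matroid_def)
lemma mat_empty: "matroid M \<Longrightarrow> indep M {}" by (simp add: matroid_def)
lemma mat_sub: "matroid M \<Longrightarrow> indep M X \<Longrightarrow> X \<subseteq> ground M" by (simp add: matroid_def)
lemma mat_down: "matroid M \<Longrightarrow> indep M Y \<Longrightarrow> X \<subseteq> Y \<Longrightarrow> indep M X"
  unfolding matroid_def by blast
lemma mat_aug: "matroid M \<Longrightarrow> indep M X \<Longrightarrow> indep M Y \<Longrightarrow> card X < card Y \<Longrightarrow> \<exists>e\<in>Y-X. indep M (insert e X)"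
  unfolding matroid_def by blast

lemma indep_fin: "matroid M \<Longrightarrow> indep M X \<Longrightarrow> finite X"
  using mat_sub mat_finite finite_subset by blast

lemma rank_set_finite: "matroid M \<Longrightarrow> finite {Y. Y \<subseteq> X \<and> indep M Y}"
proof -
  assume m: "matroid M"
  have "{Y. Y \<subseteq> X \<and> indep M Y} \<subseteq> Pow (ground M)" using mat_sub[OF m] by blast
  then show ?thesis using finite_subset mat_finite[OF m] by blast
qed

lemma rank_ge: "matroid M \<Longrightarrow> Y \<subseteq> X \<Longrightarrow> indep M Y \<Longrightarrow> card Y \<le> rank M X"
  unfolding rank_def by (rule Max_ge) (auto simp: rank_set_finite)

lemma rank_obtain: "matroid M \<Longrightarrow> \<exists>Y. Y \<subseteq> X \<and> indep M Y \<and> card Y = rank M X"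
proof -
  assume m: "matroid M"
  have "rank M X \<in> card ` {Y. Y \<subseteq> X \<and> indep M Y}"
    unfolding rank_def apply (rule Max_in) using rank_set_finite[OF m] mat_empty[OF m] by auto
  then show ?thesis by auto
qed

lemma rank_mono: "matroid M \<Longrightarrow> X \<subseteq> Y \<Longrightarrow> rank M X \<le> rank M Y"
proof -
  assume m: "matroid M" and XY: "X \<subseteq> Y"
  obtain Z where Z: "Z \<subseteq> X" "indep M Z" "card Z = rank M X" using rank_obtain[OF m] by blast
  have "Z \<subseteq> Y" using Z XY by blast
  from rank_ge[OF m this Z(2)] Z(3) show ?thesis by simp
qed

lemma rank_le_card: "matroid M \<Longrightarrow> finite X \<Longrightarrow> rank M X \<le> card X"
proof -
  assume m: "matroid M" and f: "finite X"
  obtain Z where Z: "Z \<subseteq> X" "indep M Z" "card Z = rank M X" using rank_obtain[OF m] by blast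
  from card_mono[OF f Z(1)] Z(3) show ?thesis by simp
qed

lemma rank_empty: "matroid M \<Longrightarrow> rank M {} = 0"
  using rank_le_card[of M "{}"] by simp

lemma rank_indep: "matroid M \<Longrightarrow> indep M X \<Longrightarrow> rank M X = card X"
proof -
  assume m: "matroid M" and i: "indep M X"
  have "card X \<le> rank M X" using rank_ge[OF m _ i] by simp
  moreover have "rank M X \<le> card X" using rank_le_card[OF m indep_fin[OF m i]] .
  ultimately show ?thesis by simp
qed

lemma indep_of_rank: "matroid M \<Longrightarrow> finite X \<Longrightarrow> rank M X = card X \<Longrightarrow> indep M X"
proof -
  assume m: "matroid M" and f: "finite X" and r: "rank M X = card X"
  obtain Z where Z: "Z \<subseteq> X" "indep M Z" "card Z = rank M X" using rank_obtain[OF m] by blast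
  have "Z = X" using card_subset_eq[OF f Z(1)] Z(3) r by simp
  then show ?thesis using Z(2) by simp
qed

lemma rank_extend:
  assumes m: "matroid M"
  shows "indep M I \<Longrightarrow> I \<subseteq> Z \<Longrightarrow> \<exists>J. I \<subseteq> J \<and> J \<subseteq> Z \<and> indep M J \<and> card J = rank M Z"
proof (induction "rank M Z - card I" arbitrary: I rule: less_induct)
  case less
  have le: "card I \<le> rank M Z" using rank_ge[OF m less(3) less(2)] .
  show ?case
  proof (cases "card I = rank M Z")
    case True then show ?thesis using less by blast
  next
    case False
    then have lt: "card I < rank M Z" using le by simp
    obtain K where K: "K \<subseteq> Z" "indep M K" "card K = rank M Z" using rank_obtain[OF m] by blast
    obtain e where e: "e \<in> K - I" "indep M (insert e I)" using mat_aug[OF m less(2) K(2)] lt K(3) by auto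
    have fI: "finite I" using indep_fin[OF m less(2)] .
    have c: "card (insert e I) = card I + 1" using e fI by simp
    have lt2: "rank M Z - card (insert e I) < rank M Z - card I" using c lt by simp
    have sub: "insert e I \<subseteq> Z" using e K less(3) by blast
    obtain J where "insert e I \<subseteq> J" "J \<subseteq> Z" "indep M J" "card J = rank M Z"
      using less(1)[of "insert e I", OF lt2 e(2) sub] by blast
    then show ?thesis by blast
  qed
qed

lemma rank_submod:
  assumes m: "matroid M"
  shows "rank M (X \<union> Y) + rank M (X \<inter> Y) \<le> rank M X + rank M Y"
proof -
  obtain I where I: "I \<subseteq> X \<inter> Y" "indep M I" "card I = rank M (X \<inter> Y)" using rank_obtain[OF m] by blast
  obtain J where J: "I \<subseteq> J" "J \<subseteq> X \<union> Y" "indep M J" "card J = rank M (X \<union> Y)"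
    using rank_extend[OF m I(2), of "X \<union> Y"] I(1) by auto
  have fJ: "finite J" using indep_fin[OF m J(3)] .
  have iX: "indep M (J \<inter> X)" using mat_down[OF m J(3), of "J \<inter> X"] by simp
  have iY: "indep M (J \<inter> Y)" using mat_down[OF m J(3), of "J \<inter> Y"] by simp
  have a: "card (J \<inter> X) \<le> rank M X" using rank_ge[OF m _ iX] by simp
  have b: "card (J \<inter> Y) \<le> rank M Y" using rank_ge[OF m _ iY] by simp
  have "card (J \<inter> X) + card (J \<inter> Y) = card ((J \<inter> X) \<union> (J \<inter> Y)) + card ((J \<inter> X) \<inter> (J \<inter> Y))"
    using card_Un_Int fJ by (metis finite_Int)
  moreover have "card ((J \<inter> X) \<union> (J \<inter> Y)) = card J" using J(2) by (metis Int_Un_distrib inf.absorb1)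
  moreover have "card I \<le> card ((J \<inter> X) \<inter> (J \<inter> Y))"
    apply (rule card_mono) using fJ apply simp using I J by blast
  ultimately show ?thesis using a b I(3) J(4) by linarith
qed

lemma rank_subadd: "matroid M \<Longrightarrow> rank M (X \<union> Y) \<le> rank M X + rank M Y"
  using rank_submod[of M X Y] by linarith

lemma Max_card_eq: "finite F \<Longrightarrow> Y0 \<in> F \<Longrightarrow> card Y0 = m \<Longrightarrow> (\<And>Y. Y \<in> F \<Longrightarrow> card Y \<le> m) \<Longrightarrow> Max (card ` F) = m"
  by (rule Max_eqI) auto

lemma indep_contr: "indep (contraction M C) X \<longleftrightarrow> X \<subseteq> ground M - C \<and> rank M (X \<union> C) = card X + rank M C"
  by (simp add: indep_def contraction_def)

lemma ground_minor: "ground (minor M C D) = ground M - C - D"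
  by (simp add: minor_def deletion_def contraction_def ground_def)

lemma indep_minor: "indep (minor M C D) X \<longleftrightarrow> X \<subseteq> ground M - C - D \<and> rank M (X \<union> C) = card X + rank M C"
  by (auto simp add: minor_def deletion_def contraction_def indep_def ground_def)

lemma rank_minor:
  assumes m: "matroid M" and C: "C \<subseteq> ground M" and X: "X \<subseteq> ground M - C - D"
  shows "rank (minor M C D) X = rank M (X \<union> C) - rank M C"
proof -
  let ?F = "{Y. Y \<subseteq> X \<and> indep (minor M C D) Y}"
  have fX: "finite X" using X mat_finite[OF m] finite_subset by blast
  have fF: "finite ?F" by (rule finite_subset[of _ "Pow X"]) (auto simp: fX)
  obtain I where I: "I \<subseteq> C" "indep M I" "card I = rank M C" using rank_obtain[OF m] by blast
  obtain J where J: "I \<subseteq> J" "J \<subseteq> X \<union> C" "indep M J" "card J = rank M (X \<union> C)"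
    using rank_extend[OF m I(2), of "X \<union> C"] I(1) by auto
  have fJ: "finite J" using indep_fin[OF m J(3)] .
  define Y0 where "Y0 = J - C"
  have Y0X: "Y0 \<subseteq> X" using J(2) Y0_def by blast
  have fY0: "finite Y0" using Y0X fX finite_subset by blast
  have cJ: "card J = card Y0 + card (J \<inter> C)"
  proof -
    have "J = Y0 \<union> (J \<inter> C)" "Y0 \<inter> (J \<inter> C) = {}" unfolding Y0_def by blast+
    moreover have "card (Y0 \<union> (J \<inter> C)) = card Y0 + card (J \<inter> C)"
      by (rule card_Un_disjoint) (use fY0 fJ Y0_def in auto)
    ultimately show ?thesis by simp
  qed
  have cJC: "card I \<le> card (J \<inter> C)" apply (rule card_mono) using fJ I J by auto
  have r1: "card J \<le> rank M (Y0 \<union> C)" apply (rule rank_ge[OF m _ J(3)]) using Y0_def by blast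
  have r2: "rank M (Y0 \<union> C) \<le> rank M Y0 + rank M C" using rank_subadd[OF m] .
  have r3: "rank M Y0 \<le> card Y0" using rank_le_card[OF m fY0] .
  have eq1: "rank M (Y0 \<union> C) = card Y0 + rank M C" using r1 r2 r3 cJ cJC I(3) by linarith
  have eq2: "card Y0 = rank M (X \<union> C) - rank M C" using r1 r2 r3 cJ cJC I(3) J(4) by linarith
  have inY0: "Y0 \<in> ?F" using Y0X X eq1 by (auto simp: indep_minor)
  have ub: "card Y \<le> rank M (X \<union> C) - rank M C" if "Y \<in> ?F" for Y
  proof -
    have "rank M (Y \<union> C) = card Y + rank M C" using that by (simp add: indep_minor)
    moreover have "rank M (Y \<union> C) \<le> rank M (X \<union> C)" apply (rule rank_mono[OF m]) using that by blast
    ultimately show ?thesis by linarith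
  qed
  show ?thesis unfolding rank_def[of "minor M C D"] by (rule Max_card_eq[OF fF inY0 eq2 ub])
qed



definition LL :: "'a matroid \<Rightarrow> 'a set \<Rightarrow> 'a set \<Rightarrow> 'a set \<Rightarrow> int" where
  "LL M C D X = int (rank M (X \<union> C)) + int (rank M (ground M - D - X)) - int (rank M C) - int (rank M (ground M - D))"

lemma conn_minor:
  assumes m: "matroid M" and C: "C \<subseteq> ground M" and CD: "C \<inter> D = {}" and X: "X \<subseteq> ground M - C - D"
  shows "int (conn (minor M C D)  X) = LL M C D X"
proof -
  let ?E = "ground M"
  let ?G = "ground M - C - D"
  have g: "ground (minor M C D) = ?G" by (rule ground_minor)
  have a: "rank (minor M C D) X = rank M (X \<union> C) - rank M C" by (rule rank_minor[OF m C X])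
  have b: "rank (minor M C D) (?G - X) = rank M ((?G - X) \<union> C) - rank M C" by (rule rank_minor[OF m C]) blast
  have c: "rank (minor M C D) ?G = rank M (?G \<union> C) - rank M C" by (rule rank_minor[OF m C]) blast
  have e1: "(?G - X) \<union> C = ?E - D - X" using C CD X by blast
  have e2: "?G \<union> C = ?E - D" using C CD by blast
  have i1: "rank M C \<le> rank M (X \<union> C)" by (rule rank_mono[OF m]) blast
  have i2: "rank M C \<le> rank M (?E - D - X)" by (rule rank_mono[OF m]) (use C CD X in blast)
  have i3: "rank M C \<le> rank M (?E - D)" by (rule rank_mono[OF m]) (use C CD in blast)
  have sm: "rank M ((X \<union> C) \<union> (?E - D - X)) + rank M ((X \<union> C) \<inter> (?E - D - X)) \<le> rank M (X \<union> C) + rank M (?E - D - X)"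
    by (rule rank_submod[OF m])
  have e3: "(X \<union> C) \<union> (?E - D - X) = ?E - D" using C CD X by blast
  have e4: "(X \<union> C) \<inter> (?E - D - X) = C" using C CD X by blast
  have i4: "rank M (?E - D) + rank M C \<le> rank M (X \<union> C) + rank M (?E - D - X)" using sm e3 e4 by simp
  have "conn (minor M C D) X = (rank M (X \<union> C) - rank M C) + (rank M (?E - D - X) - rank M C) - (rank M (?E - D) - rank M C)"
    unfolding conn_def g a b c e1 e2 by simp
  then show ?thesis unfolding LL_def using i1 i2 i3 i4 by linarith
qed

lemma conn_LL:
  assumes m: "matroid M" and X: "X \<subseteq> ground M"
  shows "int (conn M X) = LL M {} {} X"
proof -
  have sm: "rank M (X \<union> (ground M - X)) + rank M (X \<inter> (ground M - X)) \<le> rank M X + rank M (ground M - X)"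
    by (rule rank_submod[OF m])
  have "X \<union> (ground M - X) = ground M" "X \<inter> (ground M - X) = {}" using X by blast+
  then have "rank M (ground M) \<le> rank M X + rank M (ground M - X)" using sm rank_empty[OF m] by simp
  then show ?thesis unfolding LL_def conn_def using rank_empty[OF m] by simp
qed

lemma L1:
  assumes m: "matroid M" and "Z \<inter> X = {}"
  shows "LL M (C \<union> Z) D X \<le> LL M C D X"
proof -
  have sm: "rank M ((X \<union> C) \<union> (C \<union> Z)) + rank M ((X \<union> C) \<inter> (C \<union> Z)) \<le> rank M (X \<union> C) + rank M (C \<union> Z)"
    by (rule rank_submod[OF m])
  have "(X \<union> C) \<union> (C \<union> Z) = X \<union> (C \<union> Z)" "(X \<union> C) \<inter> (C \<union> Z) = C" using assms by blast+
  then show ?thesis using sm unfolding LL_def by simp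
qed

lemma L2:
  assumes m: "matroid M" and "Z \<subseteq> ground M - D - X" and "C \<subseteq> ground M - D - X - Z"
  shows "LL M (C \<union> Z) D X \<le> LL M C D (X \<union> Z)"
proof -
  let ?A = "ground M - D - (X \<union> Z)"
  have sm: "rank M (?A \<union> (C \<union> Z)) + rank M (?A \<inter> (C \<union> Z)) \<le> rank M ?A + rank M (C \<union> Z)"
    by (rule rank_submod[OF m])
  have "?A \<union> (C \<union> Z) = ground M - D - X" "?A \<inter> (C \<union> Z) = C" "X \<union> (C \<union> Z) = X \<union> Z \<union> C" using assms by blast+
  then show ?thesis using sm unfolding LL_def by simp
qed

lemma L3:
  assumes m: "matroid M" and "Z \<inter> X = {}"
  shows "LL M C (D \<union> Z) X \<le> LL M C D X"
proof -
  let ?A = "ground M - D - X" and ?B = "ground M - (D \<union> Z)"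
  have sm: "rank M (?A \<union> ?B) + rank M (?A \<inter> ?B) \<le> rank M ?A + rank M ?B"
    by (rule rank_submod[OF m])
  have "?A \<union> ?B = ground M - D" "?A \<inter> ?B = ground M - (D \<union> Z) - X" using assms by blast+
  then show ?thesis using sm unfolding LL_def by simp
qed

lemma L4:
  assumes m: "matroid M" and "X \<union> C \<union> Z \<subseteq> ground M - D" and "(X \<union> C) \<inter> Z = {}"
  shows "LL M C (D \<union> Z) X \<le> LL M C D (X \<union> Z)"
proof -
  let ?A = "X \<union> Z \<union> C" and ?B = "ground M - (D \<union> Z)"
  have sm: "rank M (?A \<union> ?B) + rank M (?A \<inter> ?B) \<le> rank M ?A + rank M ?B"
    by (rule rank_submod[OF m])
  have "?A \<union> ?B = ground M - D" "?A \<inter> ?B = X \<union> C" "ground M - (D \<union> Z) - X = ground M - D - (X \<union> Z)"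
    using assms by blast+
  then show ?thesis using sm unfolding LL_def by simp
qed

lemma skew:
  assumes m: "matroid M" and "rank M (P \<union> C) = rank M P + rank M C" and "P \<inter> C = {}" and "X \<subseteq> P"
  shows "rank M (X \<union> C) = rank M X + rank M C"
proof -
  have sm: "rank M ((X \<union> C) \<union> P) + rank M ((X \<union> C) \<inter> P) \<le> rank M (X \<union> C) + rank M P"
    by (rule rank_submod[OF m])
  have "(X \<union> C) \<union> P = P \<union> C" "(X \<union> C) \<inter> P = X" using assms by blast+
  then show ?thesis using sm assms(2) rank_subadd[OF m, of X C] by simp
qed

lemma restr_eq:
  assumes m: "matroid M" and P: "P \<subseteq> ground M - C - D" and sk: "rank M (P \<union> C) = rank M P + rank M C"
    and PC: "P \<inter> C = {}"
  shows "restriction (minor M C D) P = restriction M P"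
proof -
  have g1: "ground (minor M C D) - (ground (minor M C D) - P) = P" unfolding ground_minor using P by blast
  have g2: "ground M - (ground M - P) = P" using P by blast
  have ind: "(indep (minor M C D) X \<and> X \<subseteq> P) = (indep M X \<and> X \<subseteq> P)" for X
  proof (cases "X \<subseteq> P")
    case True
    have XE: "X \<subseteq> ground M" using True P by blast
    have fX: "finite X" using finite_subset[OF XE mat_finite[OF m]] .
    have "rank M (X \<union> C) = rank M X + rank M C" by (rule skew[OF m sk PC True])
    moreover have "X \<subseteq> ground M - C - D" using True P by (rule order_trans)
    ultimately have "indep (minor M C D) X = (rank M X = card X)" by (simp add: indep_minor)
    also have "\<dots> = indep M X"
    proof
      assume "rank M X = card X" then show "indep M X" by (rule indep_of_rank[OF m fX])
    next
      assume "indep M X" then show "rank M X = card X" by (rule rank_indep[OF m])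
    qed
    finally show ?thesis by simp
  qed simp
  have fst1: "fst (restriction (minor M C D) P) = P"
    using g1 by (simp add: restriction_def deletion_def ground_def)
  have fst2: "fst (restriction M P) = P"
    using g2 by (simp add: restriction_def deletion_def ground_def)
  have snd1: "snd (restriction (minor M C D) P) X = (indep (minor M C D) X \<and> X \<subseteq> P)" for X
    using g1 by (simp add: restriction_def deletion_def indep_def)
  have snd2: "snd (restriction M P) X = (indep M X \<and> X \<subseteq> P)" for X
    using g2 by (simp add: restriction_def deletion_def indep_def)
  show ?thesis
  proof (rule prod_eqI)
    show "fst (restriction (minor M C D) P) = fst (restriction M P)" using fst1 fst2 by simp
    show "snd (restriction (minor M C D) P) = snd (restriction M P)"
      by (rule ext) (simp only: snd1 snd2 ind)
  qed
qed



lemma main: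
  assumes m: "matroid M" and ST: "S \<subseteq> ground M" "T \<subseteq> ground M" "S \<inter> T = {}"
    and AiAj: "A i \<subseteq> A j" and Si: "S \<subseteq> A i" and Aj: "A j \<subseteq> ground M - T"
    and ci: "conn M (A i) = k" and cj: "conn M (A j) = k"
    and CD: "C \<union> D = ground M - (S \<union> T)" "C \<inter> D = {}"
    and cN: "conn (minor M C D) S = k"
    and dB: "Bj = ground M - A j" and dC: "C' = C \<inter> (A j - A i)" and dD: "D' = D \<inter> (A j - A i)"
    and dM: "M' = minor M C' D'"
  shows "A i \<union> Bj = ground M' \<and> A i \<inter> Bj = {} \<and>
            S \<subseteq> A i \<and> T \<subseteq> Bj \<and> conn M' (A i) = k \<and>
            restriction M' (A i) = restriction M (A i) \<and>
            restriction M' Bj = restriction M Bj"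
proof -
  let ?E = "ground M"
  define Ca where "Ca = C \<inter> A i"
  define Cb where "Cb = C - A j"
  define Da where "Da = D \<inter> A i"
  define Db where "Db = D - A j"
  note facts = ST AiAj Si Aj CD dB dC dD Ca_def Cb_def Da_def Db_def
  have CE: "C \<subseteq> ?E" using facts by blast
  have AiE: "A i \<subseteq> ?E" using facts by blast
  have C'E: "C' \<subseteq> ?E" using facts by blast
  have C'D': "C' \<inter> D' = {}" using facts by blast
  have gM': "ground M' = ?E - C' - D'" unfolding dM by (rule ground_minor)
  have g1: "A i \<union> Bj = ground M'" unfolding gM' using facts by blast
  have g2: "A i \<inter> Bj = {}" using facts by blast
  have g3: "T \<subseteq> Bj" using facts by blast
  have AiG: "A i \<subseteq> ?E - C' - D'" using facts by blast
  have BjG: "Bj \<subseteq> ?E - C' - D'" using facts by blast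
  have cM': "int (conn M' (A i)) = LL M C' D' (A i)"
    unfolding dM by (rule conn_minor[OF m C'E C'D' AiG])
  have kN: "int k = LL M C D S"
    using conn_minor[OF m CE CD(2), of S] cN facts by blast
  have kAi: "int k = LL M {} {} (A i)" using conn_LL[OF m AiE] ci by simp
  have AjE: "A j \<subseteq> ?E" using facts by blast
  have kAj: "int k = LL M {} {} (A j)" using conn_LL[OF m AjE] cj by simp
  have eqC: "C = C' \<union> Ca \<union> Cb" using facts by blast
  have eqD: "D = D' \<union> Da \<union> Db" using facts by blast
  have s1: "LL M (C' \<union> Ca \<union> Cb) (D' \<union> Da \<union> Db) S \<le> LL M (C' \<union> Ca) (D' \<union> Da \<union> Db) S"
    by (rule L1[OF m]) (use facts in blast)
  have s2: "LL M (C' \<union> Ca) (D' \<union> Da \<union> Db) S \<le> LL M C' (D' \<union> Da \<union> Db) (S \<union> Ca)"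
    by (rule L2[OF m]) (use facts in blast)+
  have s3: "LL M C' (D' \<union> Da \<union> Db) (S \<union> Ca) \<le> LL M C' (D' \<union> Da) (S \<union> Ca)"
    by (rule L3[OF m]) (use facts in blast)
  have s4: "LL M C' (D' \<union> Da) (S \<union> Ca) \<le> LL M C' D' (S \<union> Ca \<union> Da)"
    by (rule L4[OF m]) (use facts in blast)+
  have eqA: "S \<union> Ca \<union> Da = A i" using facts by blast
  have lo: "int k \<le> LL M C' D' (A i)" using kN s1 s2 s3 s4 eqC eqD eqA by simp
  have b1: "LL M C' D' (A i) \<le> LL M C' {} (A i)"
  proof -
    have "LL M C' ({} \<union> D') (A i) \<le> LL M C' {} (A i)"
      by (rule L3[OF m]) (use facts in blast)
    then show ?thesis by simp
  qed
  have b2: "LL M C' {} (A i) \<le> LL M {} {} (A i)"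
  proof -
    have "LL M ({} \<union> C') {} (A i) \<le> LL M {} {} (A i)"
      by (rule L1[OF m]) (use facts in blast)
    then show ?thesis by simp
  qed
  have eb: "LL M C' {} (A i) = LL M {} {} (A i)" using lo b1 b2 kAi by linarith
  have sk1: "rank M (A i \<union> C') = rank M (A i) + rank M C'"
    using eb unfolding LL_def by (simp add: rank_empty[OF m])
  have c1: "LL M C' D' (A i) \<le> LL M C' {} (A i \<union> D')"
  proof -
    have "LL M C' ({} \<union> D') (A i) \<le> LL M C' {} (A i \<union> D')"
      by (rule L4[OF m]) (use facts in blast)+
    then show ?thesis by simp
  qed
  have c2: "LL M C' {} (A i \<union> D') \<le> LL M {} {} (A i \<union> D' \<union> C')"
  proof -
    have "LL M ({} \<union> C') {} (A i \<union> D') \<le> LL M {} {} (A i \<union> D' \<union> C')"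
      by (rule L2[OF m]) (use facts in blast)+
    then show ?thesis by simp
  qed
  have eqAj: "A i \<union> D' \<union> C' = A j" using facts by blast
  have ec: "LL M C' {} (A i \<union> D') = LL M {} {} (A j)" using lo b1 b2 c1 c2 kAi kAj eqAj by simp
  have eqB: "?E - (A i \<union> D') = Bj \<union> C'" using facts by blast
  have sk2: "rank M (Bj \<union> C') = rank M Bj + rank M C'"
    using ec unfolding LL_def by (simp add: rank_empty[OF m] eqAj eqB dB)
  have r1: "restriction M' (A i) = restriction M (A i)"
    unfolding dM by (rule restr_eq[OF m AiG sk1]) (use facts in blast)
  have r2: "restriction M' Bj = restriction M Bj"
    unfolding dM by (rule restr_eq[OF m BjG sk2]) (use facts in blast)
  have cc: "conn M' (A i) = k" using cM' lo b1 b2 kAi by linarith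
  show ?thesis by (intro conjI g1 g2 Si g3 cc r1 r2)
qed

theorem lemma3p7:
  fixes M :: "'a matroid" and S T C D :: "'a set" and A :: "nat \<Rightarrow> 'a set"
    and t i j k :: nat
  assumes "matroid M"
    and "S \<subseteq> ground M" and "T \<subseteq> ground M" and "S \<inter> T = {}"
    and "k = kappa M S T"
    and "\<forall>p q. 1 \<le> p \<and> p \<le> q \<and> q \<le> t \<longrightarrow> A p \<subseteq> A q"
    and "\<forall>p\<in>{1..t}. S \<subseteq> A p \<and> A p \<subseteq> ground M - T \<and> conn M (A p) = k"
    and "C \<union> D = ground M - (S \<union> T)" and "C \<inter> D = {}"
    and "indep M C" and "coindep M D"
    and "conn (minor M C D) S = k"
    and "1 \<le> i" and "i < j" and "j \<le> t"
  shows "let Bj = ground M - A j;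
             C' = C \<inter> (A j - A i);
             D' = D \<inter> (A j - A i);
             M' = minor M C' D'
         in A i \<union> Bj = ground M' \<and> A i \<inter> Bj = {} \<and>
            S \<subseteq> A i \<and> T \<subseteq> Bj \<and> conn M' (A i) = k \<and>
            restriction M' (A i) = restriction M (A i) \<and>
            restriction M' Bj = restriction M Bj"
proof -
  have ij: "A i \<subseteq> A j" using assms(6) assms(13,14,15) by simp
  have hi: "S \<subseteq> A i" "conn M (A i) = k" using assms(7) assms(13,14,15) by auto
  have hj: "A j \<subseteq> ground M - T" "conn M (A j) = k" using assms(7) assms(13,14,15) by auto
  show ?thesis unfolding Let_def
    by (rule main[where M=M and S=S and T=T and A=A and i=i and j=j and k=k and C=C and D=D, OF assms(1,2,3,4) ij hi(1) hj(1) hi(2) hj(2) assms(8,9,12)]) (rule refl)+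
qed

end
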